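(* A family $\mathcal{F}\subseteq 2^{[n]}$ is s-extremal if and only if there exists a Sperner family $\mathcal{S}\subseteq 2^{[n]}$ such that $\mathcal{F}$ is $\mathcal{S}$-extremal.
   Context: $[n]=\{1,\dots,n\}$. A Sperner family is a family of sets none of which is contained in another. $\mathcal{F}$ shatters $S$ if $\{F\cap S:F\in\mathcal{F}\}=2^S$; $\mathrm{Sh}(\mathcal{F})$ is the family of shattered sets; $\mathcal{F}$ is s-extremal if $|\mathrm{Sh}(\mathcal{F})|=|\mathcal{F}|$. $\mathcal{H}(\mathcal{S})=\{F\subseteq[n]: \text{no } S\in\mathcal{S} \text{ satisfies } S\subseteq F\}$. For a Sperner family $\mathcal{S}$, a family $\mathcal{F}\subseteq 2^{[n]}$ is called $\mathcal{S}$-extremal if $\mathcal{F}$ shatters no element of $\mathcal{S}$ and $|\mathcal{F}|=|\mathcal{H}(\mathcal{S})|$. *)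

theory Defs
  imports Main
begin

definition sperner :: "'a set set \<Rightarrow> bool" where
  "sperner S \<longleftrightarrow> (\<forall>A\<in>S. \<forall>B\<in>S. A \<subseteq> B \<longrightarrow> A = B)"

definition shatters :: "'a set set \<Rightarrow> 'a set \<Rightarrow> bool" where
  "shatters F S \<longleftrightarrow> {A \<inter> S | A. A \<in> F} = Pow S"

definition Sh :: "'a set set \<Rightarrow> 'a set set" where
  "Sh F = {S. shatters F S}"

definition s_extremal :: "'a set set \<Rightarrow> bool" where
  "s_extremal F \<longleftrightarrow> card (Sh F) = card F"

definition H :: "nat \<Rightarrow> nat set set \<Rightarrow> nat set set" where
  "H n S = {A. A \<subseteq> {1..n} \<and> \<not> (\<exists>T\<in>S. T \<subseteq> A)}"

definition S_extremal :: "nat \<Rightarrow> nat set set \<Rightarrow> nat set set \<Rightarrow> bool" where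
  "S_extremal n S F \<longleftrightarrow> (\<forall>T\<in>S. \<not> shatters F T) \<and> card F = card (H n S)"

end

theory Submission
  imports Defs
begin

lemma Sh_sub: "Sh F \<subseteq> Pow (\<Union>F)"
proof
  fix S assume "S \<in> Sh F"
  hence "{A \<inter> S | A. A \<in> F} = Pow S" by (simp add: Sh_def shatters_def)
  hence "S \<in> {A \<inter> S | A. A \<in> F}" by simp
  then obtain A where "A \<in> F" "S = A \<inter> S" by blast
  thus "S \<in> Pow (\<Union>F)" by blast
qed

lemma shatters_mono:
  assumes sh0: "shatters F A" and TA: "T \<subseteq> A"
  shows "shatters F T"
proof -
  have sh: "{C \<inter> A |C. C \<in> F} = Pow A" using sh0 by (simp add: shatters_def)
  have "{C \<inter> T |C. C \<in> F} = Pow T"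
  proof (rule equalityI; rule subsetI)
    fix B assume B: "B \<in> Pow T"
    hence "B \<in> Pow A" using TA by blast
    hence "B \<in> {C \<inter> A |C. C \<in> F}" using sh by simp
    then obtain C where "C \<in> F" "B = C \<inter> A" by blast
    hence "B = C \<inter> T" using B TA by blast
    thus "B \<in> {C \<inter> T |C. C \<in> F}" using \<open>C \<in> F\<close> by blast
  next
    fix B assume "B \<in> {C \<inter> T |C. C \<in> F}"
    thus "B \<in> Pow T" by blast
  qed
  thus ?thesis by (simp add: shatters_def)
qed

lemma pajor: "finite X \<Longrightarrow> F \<subseteq> Pow X \<Longrightarrow> card F \<le> card (Sh F)"
proof (induction X arbitrary: F rule: finite_induct)
  case empty
  have "\<Union>F \<subseteq> {}" using empty by auto
  hence fin: "finite (Sh F)" using Sh_sub[of F] by (auto intro: finite_subset)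
  show ?case
  proof (cases "F = {}")
    case True thus ?thesis by simp
  next
    case False
    hence "F = {{}}" using empty by auto
    moreover have "{} \<in> Sh F" using False by (auto simp: Sh_def shatters_def)
    ultimately have "card F = 1" by simp
    moreover have "card (Sh F) \<noteq> 0" using fin \<open>{} \<in> Sh F\<close> by auto
    ultimately show ?thesis by simp
  qed
next
  case (insert x X)
  define F0 where "F0 = {A\<in>F. x \<notin> A}"
  define G where "G = {A\<in>F. x \<in> A}"
  define F1 where "F1 = (\<lambda>A. A - {x}) ` G"
  have finF: "finite F" using insert.hyps(1)
    by (rule finite_subset[OF insert.prems, simplified finite_Pow_iff finite_insert])
  have F0X: "F0 \<subseteq> Pow X" using insert.prems by (auto simp: F0_def)
  have F1X: "F1 \<subseteq> Pow X" using insert.prems by (auto simp: F1_def G_def)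
  have u1: "\<Union>(F0 \<union> F1) \<subseteq> X" using F0X F1X by auto
  have u2: "\<Union>(F0 \<inter> F1) \<subseteq> X" using F0X by auto
  have s1: "Sh (F0 \<union> F1) \<subseteq> Pow X" using Sh_sub[of "F0 \<union> F1"] Pow_mono[OF u1] by (rule order_trans)
  have s2: "Sh (F0 \<inter> F1) \<subseteq> Pow X" using Sh_sub[of "F0 \<inter> F1"] Pow_mono[OF u2] by (rule order_trans)
  have injG: "inj_on (\<lambda>A. A - {x}) G" unfolding inj_on_def G_def by blast
  have "card F = card F0 + card G"
  proof -
    have "F = F0 \<union> G" "F0 \<inter> G = {}" by (auto simp: F0_def G_def)
    thus ?thesis using finF by (metis card_Un_disjoint finite_Un)
  qed
  also have "card G = card F1" using injG by (simp add: F1_def card_image)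
  also have "card F0 + card F1 = card (F0 \<union> F1) + card (F0 \<inter> F1)"
    using finF by (intro card_Un_Int) (auto simp: F0_def F1_def G_def)
  also have "\<dots> \<le> card (Sh (F0 \<union> F1)) + card (Sh (F0 \<inter> F1))"
  proof -
    have "F0 \<inter> F1 \<subseteq> Pow X" using F0X by blast
    hence "card (F0 \<inter> F1) \<le> card (Sh (F0 \<inter> F1))" by (rule insert.IH)
    moreover have "card (F0 \<union> F1) \<le> card (Sh (F0 \<union> F1))" using F0X F1X by (intro insert.IH) simp
    ultimately show ?thesis by simp
  qed
  also have "\<dots> = card (Sh (F0 \<union> F1) \<union> insert x ` Sh (F0 \<inter> F1))"
  proof -
    have fX: "finite (Pow X)" using insert.hyps by simp
    have nx: "\<And>a. a \<in> Sh (F0 \<inter> F1) \<Longrightarrow> x \<notin> a" using s2 insert.hyps(2) by blast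
    have inj: "inj_on (insert x) (Sh (F0 \<inter> F1))"
    proof (rule inj_onI)
      fix a b assume "a \<in> Sh (F0 \<inter> F1)" "b \<in> Sh (F0 \<inter> F1)" "insert x a = insert x b"
      thus "a = b" using nx by (metis Diff_insert_absorb)
    qed
    have disj: "Sh (F0 \<union> F1) \<inter> insert x ` Sh (F0 \<inter> F1) = {}" using s1 insert.hyps(2) by blast
    have "card (Sh (F0 \<union> F1) \<union> insert x ` Sh (F0 \<inter> F1)) =
      card (Sh (F0 \<union> F1)) + card (insert x ` Sh (F0 \<inter> F1))"
      by (rule card_Un_disjoint) (use s1 s2 fX disj in \<open>auto intro: finite_subset\<close>)
    thus ?thesis using card_image[OF inj] by simp
  qed
  also have "\<dots> \<le> card (Sh F)"
  proof (rule card_mono)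
    have "\<Union>F \<subseteq> insert x X" using insert.prems by auto
    hence "finite (\<Union>F)" using insert.hyps(1) by (simp add: finite_subset)
    thus "finite (Sh F)" by (intro finite_subset[OF Sh_sub]) simp
    show "Sh (F0 \<union> F1) \<union> insert x ` Sh (F0 \<inter> F1) \<subseteq> Sh F"
    proof (intro Un_least subsetI)
      fix T assume T: "T \<in> Sh (F0 \<union> F1)"
      have "x \<notin> T" using T s1 insert.hyps(2) by blast
      show "T \<in> Sh F" unfolding Sh_def shatters_def
      proof (rule CollectI, rule equalityI; rule subsetI)
        fix B assume "B \<in> Pow T"
        with T have "B \<in> {A \<inter> T |A. A \<in> F0 \<union> F1}" by (simp add: Sh_def shatters_def)
        then obtain A where A: "A \<in> F0 \<union> F1" "B = A \<inter> T" by blast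
        show "B \<in> {A \<inter> T |A. A \<in> F}"
        proof (cases "A \<in> F0")
          case True thus ?thesis using A by (auto simp: F0_def)
        next
          case False
          then obtain C where "C \<in> G" "A = C - {x}" using A by (auto simp: F1_def)
          hence "C \<in> F" "B = C \<inter> T" using A \<open>x \<notin> T\<close> by (auto simp: G_def)
          thus ?thesis by blast
        qed
      next
        fix B assume "B \<in> {A \<inter> T |A. A \<in> F}"
        thus "B \<in> Pow T" by blast
      qed
    next
      fix U assume "U \<in> insert x ` Sh (F0 \<inter> F1)"
      then obtain T where T: "T \<in> Sh (F0 \<inter> F1)" and U: "U = insert x T" by blast
      have "x \<notin> T" using T s2 insert.hyps(2) by blast
      show "U \<in> Sh F" unfolding Sh_def shatters_def
      proof (rule CollectI, rule equalityI; rule subsetI)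
        fix B assume B: "B \<in> Pow U"
        hence "B - {x} \<in> Pow T" using U by blast
        with T have "B - {x} \<in> {A \<inter> T |A. A \<in> F0 \<inter> F1}" by (simp add: Sh_def shatters_def)
        then obtain A where A: "A \<in> F0" "A \<in> F1" "B - {x} = A \<inter> T" by blast
        have xA: "x \<notin> A" "A \<in> F" using A(1) by (auto simp: F0_def)
        obtain C where C: "C \<in> G" "A = C - {x}" using A(2) by (auto simp: F1_def)
        have "C = insert x A" using C xA by (auto simp: G_def)
        hence CF: "insert x A \<in> F" using C by (auto simp: G_def)
        show "B \<in> {A \<inter> U |A. A \<in> F}"
        proof (cases "x \<in> B")
          case True
          hence "B = insert x A \<inter> U" using A(3) U B by blast
          thus ?thesis using CF by blast
        next
          case False
          hence "B = A \<inter> U" using A(3) U B xA by blast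
          thus ?thesis using xA by blast
        qed
      next
        fix B assume "B \<in> {A \<inter> U |A. A \<in> F}"
        thus "B \<in> Pow U" by blast
      qed
    qed
  qed
  finally show ?case .
qed

lemma min_nonshat:
  assumes "finite A" "\<not> shatters F A"
  shows "\<exists>T\<subseteq>A. \<not> shatters F T \<and> (\<forall>U\<subset>T. shatters F U)"
  using assms
proof (induction A rule: finite_psubset_induct)
  case (psubset A)
  show ?case
  proof (cases "\<forall>U\<subset>A. shatters F U")
    case True
    have "A \<subseteq> A" by simp
    thus ?thesis using True psubset.prems by blast
  next
    case False
    then obtain U where U: "U \<subset> A" "\<not> shatters F U" by blast
    obtain T where T: "T \<subseteq> U" "\<not> shatters F T" "\<forall>V\<subset>T. shatters F V"
      using psubset.IH[OF U] by blast
    have "T \<subseteq> A" using T(1) U(1) by (rule subset_psubset_trans[THEN psubset_imp_subset])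
    thus ?thesis using T(2,3) by blast
  qed
qed

theorem proposition13:
  fixes n :: nat and F :: "nat set set"
  assumes "F \<subseteq> Pow {1..n}"
  shows "s_extremal F \<longleftrightarrow> (\<exists>S. S \<subseteq> Pow {1..n} \<and> sperner S \<and> S_extremal n S F)"
proof -
  have "\<Union>F \<subseteq> {1..n}" using assms by auto
  hence ShP: "Sh F \<subseteq> Pow {1..n}" using Sh_sub[of F] by (meson Pow_mono order_trans)
  have finP: "finite (Pow {1..n::nat})" by simp
  have pj: "card F \<le> card (Sh F)" using pajor[OF _ assms] by simp
  show ?thesis
  proof
    assume ext: "s_extremal F"
    define S where "S = {T\<in>Pow {1..n}. \<not> shatters F T \<and> (\<forall>U\<subset>T. shatters F U)}"
    have sp: "sperner S" unfolding sperner_def S_def by blast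
    have "H n S = Sh F"
    proof (intro equalityI subsetI)
      fix A assume A: "A \<in> H n S"
      show "A \<in> Sh F"
      proof (rule ccontr)
        assume "A \<notin> Sh F"
        hence nsh: "\<not> shatters F A" by (simp add: Sh_def)
        have An: "A \<subseteq> {1..n}" using A by (simp add: H_def)
        have fin: "finite A" by (rule finite_subset[OF An]) simp
        obtain T where T: "T \<subseteq> A" "\<not> shatters F T" "\<forall>U\<subset>T. shatters F U"
          using min_nonshat[OF fin nsh] by blast
        have "T \<subseteq> {1..n}" using T(1) An by (rule order_trans)
        hence "T \<in> S" using T(2,3) unfolding S_def by simp
        thus False using A T(1) by (simp add: H_def)
      qed
    next
      fix A assume A: "A \<in> Sh F"
      hence "A \<subseteq> {1..n}" using ShP by blast
      moreover have "\<not> (\<exists>T\<in>S. T \<subseteq> A)"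
      proof
        assume "\<exists>T\<in>S. T \<subseteq> A"
        then obtain T where "T \<in> S" "T \<subseteq> A" by blast
        moreover have "shatters F A" using A by (simp add: Sh_def)
        ultimately show False using shatters_mono[of F A T] by (simp add: S_def)
      qed
      ultimately show "A \<in> H n S" by (simp add: H_def)
    qed
    moreover have "\<forall>T\<in>S. \<not> shatters F T" by (simp add: S_def)
    ultimately have "S_extremal n S F" using ext unfolding S_extremal_def s_extremal_def
      by simp
    moreover have "S \<subseteq> Pow {1..n}" by (auto simp: S_def)
    ultimately show "\<exists>S. S \<subseteq> Pow {1..n} \<and> sperner S \<and> S_extremal n S F" using sp by blast
  next
    assume "\<exists>S. S \<subseteq> Pow {1..n} \<and> sperner S \<and> S_extremal n S F"
    then obtain S where S: "S_extremal n S F" by blast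
    have "Sh F \<subseteq> H n S"
    proof
      fix A assume A: "A \<in> Sh F"
      hence "A \<subseteq> {1..n}" using ShP by blast
      moreover have "\<not> (\<exists>T\<in>S. T \<subseteq> A)"
      proof
        assume "\<exists>T\<in>S. T \<subseteq> A"
        then obtain T where "T \<in> S" "T \<subseteq> A" by blast
        moreover have "shatters F A" using A by (simp add: Sh_def)
        ultimately show False using shatters_mono[of F A T] S by (simp add: S_extremal_def)
      qed
      ultimately show "A \<in> H n S" by (simp add: H_def)
    qed
    moreover have "finite (H n S)" by (rule finite_subset[OF _ finP]) (auto simp: H_def)
    ultimately have "card (Sh F) \<le> card (H n S)" by (rule card_mono[rotated])
    moreover have "card F = card (H n S)" using S unfolding S_extremal_def by blast
    ultimately have "card (Sh F) = card F" using pj by linarith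
    thus "s_extremal F" unfolding s_extremal_def .
  qed
qed

end
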